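(* Let $\mathsf{C}\subset V$ be a polyhedral proper cone, $\phi$ in the interior of $\mathsf{C}^*$, $K_\phi=\mathsf{C}\cap\phi^{-1}(1)$, and $k\ge1$. For each facet $F$ of $K_\phi$ choose $x_F$ in the relative interior of $F$, and set $\omega_k=\sum_{F\in\mathcal F(K_\phi)}x_F^{\otimes k}\otimes\psi_F\in V^{\otimes k}\otimes V^*$. The following are equivalent: (i) $\omega_k$ lies in the interior of $\mathsf{C}^{\otimes_{\max}k}\otimes_{\max}\mathsf{C}^*$; (ii) for every vertex $x\in\mathcal V(K_\phi)$, $\mathrm{card}(\mathrm{Av}(x))>k$.
   Context: Proper cone: closed convex cone in a finite-dimensional real vector space, containing no line, not contained in a hyperplane; $\mathsf{C}^*$ is its dual cone; $\mathsf{C}_1\otimes_{\max}\mathsf{C}_2=\{z:(f\otimes g)(z)\ge0\ \forall f\in\mathsf{C}_1^*,g\in\mathsf{C}_2^*\}$, iterated. $\mathcal V(P)$ and $\mathcal F(P)$ are the vertex set and facet set of a polytope $P$. For each facet $F$, $\psi_F\in\mathsf{C}^*$ is a linear form with $F=K_\phi\cap\ker\psi_F$. The avoiding set of a vertex $x$ is $\mathrm{Av}(x)=\{F\in\mathcal F(K_\phi):x\notin F\}$. *)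

theory Defs
  imports "HOL-Analysis.Analysis"
begin

text \<open>V is modelled as real^'n; V^* is identified with real^'n via the inner product.\<close>

definition dual_cone :: "(real^'n) set \<Rightarrow> (real^'n) set" where
  "dual_cone C = {f. \<forall>x\<in>C. 0 \<le> f \<bullet> x}"

definition proper_cone :: "(real^'n) set \<Rightarrow> bool" where
  "proper_cone C \<longleftrightarrow> closed C \<and> convex C \<and> cone C \<and> C \<noteq> {} \<and>
     \<not> (\<exists>x v. v \<noteq> 0 \<and> (\<forall>t::real. x + t *\<^sub>R v \<in> C)) \<and>
     \<not> (\<exists>a b. a \<noteq> 0 \<and> C \<subseteq> {x. a \<bullet> x = b})"

definition polyhedral_cone :: "(real^'n) set \<Rightarrow> bool" where
  "polyhedral_cone C \<longleftrightarrow> polyhedron C \<and> cone C \<and> C \<noteq> {}"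

definition Kphi :: "(real^'n) set \<Rightarrow> real^'n \<Rightarrow> (real^'n) set" where
  "Kphi C \<phi> = C \<inter> {x. \<phi> \<bullet> x = 1}"

text \<open>Elements of V^{\<otimes>k} \<otimes> V^* are coordinate arrays indexed by
  ('k \<Rightarrow> 'n) \<times> 'n, where k = CARD('k).  The max tensor product
  C \<otimes>max ... \<otimes>max C (k times) \<otimes>max C^* consists of the tensors on which every
  product functional f_1 \<otimes> ... \<otimes> f_k \<otimes> g with f_i \<in> C^*, g \<in> (C^*)^* is nonnegative.\<close>

definition prod_functional ::
  "('k::finite \<Rightarrow> real^'n) \<Rightarrow> real^'n \<Rightarrow> real^(('k \<Rightarrow> 'n) \<times> 'n) \<Rightarrow> real" where
  "prod_functional fs g z = (\<Sum>p\<in>UNIV. (\<Prod>i\<in>UNIV. fs i $ fst p i) * g $ snd p * z $ p)"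

definition max_tensor_cone :: "(real^'n) set \<Rightarrow> (real^(('k::finite \<Rightarrow> 'n) \<times> 'n)) set" where
  "max_tensor_cone C = {z. \<forall>fs g. (\<forall>i. fs i \<in> dual_cone C) \<longrightarrow> g \<in> dual_cone (dual_cone C)
       \<longrightarrow> 0 \<le> prod_functional fs g z}"

definition tensor_power_dual :: "real^'n \<Rightarrow> real^'n \<Rightarrow> real^(('k::finite \<Rightarrow> 'n) \<times> 'n)" where
  "tensor_power_dual x \<psi> = (\<chi> p. (\<Prod>i\<in>UNIV. x $ fst p i) * \<psi> $ snd p)"

definition omega ::
  "(real^'n) set \<Rightarrow> ((real^'n) set \<Rightarrow> real^'n) \<Rightarrow> ((real^'n) set \<Rightarrow> real^'n)
     \<Rightarrow> real^(('k::finite \<Rightarrow> 'n) \<times> 'n)" where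
  "omega K xF \<psi> = (\<Sum>F\<in>{F. F facet_of K}. tensor_power_dual (xF F) (\<psi> F))"

definition Av :: "(real^'n) set \<Rightarrow> real^'n \<Rightarrow> (real^'n) set set" where
  "Av K x = {F. F facet_of K \<and> x \<notin> F}"

end

theory Submission
  imports Defs "HOL-Library.FuncSet"
begin


definition prod_tensor :: "('k::finite \<Rightarrow> real^'n) \<Rightarrow> real^'n \<Rightarrow> real^(('k \<Rightarrow> 'n) \<times> 'n)" where
  "prod_tensor us v = (\<chi> p. (\<Prod>i\<in>UNIV. us i $ fst p i) * v $ snd p)"

lemma sum_fun_prod:
  fixes a :: "'k::finite \<Rightarrow> 'n::finite \<Rightarrow> real"
  shows "(\<Sum>h\<in>UNIV. \<Prod>i\<in>UNIV. a i (h i)) = (\<Prod>i\<in>UNIV. \<Sum>j\<in>UNIV. a i j)"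
proof -
  have "PiE (UNIV::'k set) (\<lambda>_. (UNIV::'n set)) = UNIV" by (simp add: PiE_UNIV_domain)
  then show ?thesis using prod_sum_PiE[of "UNIV::'k set" "\<lambda>_. UNIV" a] by simp
qed

lemma sum_UNIV_pair: "(\<Sum>p\<in>UNIV. f p) = (\<Sum>h\<in>UNIV. \<Sum>j\<in>UNIV. f (h,j))"
  unfolding UNIV_Times_UNIV[symmetric] sum.cartesian_product by simp

lemma pf_prod_tensor:
  "prod_functional fs g (prod_tensor us v) = (\<Prod>i\<in>UNIV. fs i \<bullet> us i) * (g \<bullet> v)"
proof -
  have "prod_functional fs g (prod_tensor us v)
     = (\<Sum>p\<in>UNIV. (\<Prod>i\<in>UNIV. fs i $ fst p i * us i $ fst p i) * (g $ snd p * v $ snd p))"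
    unfolding prod_functional_def prod_tensor_def
    by (simp add: prod.distrib algebra_simps)
  also have "\<dots> = (\<Sum>h\<in>UNIV. \<Sum>j\<in>UNIV. (\<Prod>i\<in>UNIV. fs i $ h i * us i $ h i) * (g $ j * v $ j))"
    by (subst sum_UNIV_pair) (simp only: fst_conv snd_conv)
  also have "\<dots> = (\<Sum>h\<in>UNIV. (\<Prod>i\<in>UNIV. fs i $ h i * us i $ h i)) * (\<Sum>j\<in>UNIV. g $ j * v $ j)"
    by (rule sum_product[symmetric])
  also have "\<dots> = (\<Prod>i\<in>UNIV. fs i \<bullet> us i) * (g \<bullet> v)"
    by (simp add: sum_fun_prod[of "\<lambda>i j. fs i $ j * us i $ j"] inner_vec_def)
  finally show ?thesis .
qed

lemma pf_add: "prod_functional fs g (z + w) = prod_functional fs g z + prod_functional fs g w"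
  unfolding prod_functional_def by (simp add: algebra_simps sum.distrib)
lemma pf_diff: "prod_functional fs g (z - w) = prod_functional fs g z - prod_functional fs g w"
  unfolding prod_functional_def by (simp add: algebra_simps sum_subtractf)
lemma pf_scale: "prod_functional fs g (c *\<^sub>R z) = c * prod_functional fs g z"
  unfolding prod_functional_def by (simp add: algebra_simps sum_distrib_left)
lemma pf_zero: "prod_functional fs g 0 = 0" by (simp add: prod_functional_def)
lemma pf_sum: "prod_functional fs g (sum h S) = (\<Sum>F\<in>S. prod_functional fs g (h F))"
proof (cases "finite S")
  case True then show ?thesis by (induction S rule: finite_induct) (auto simp: pf_add pf_zero)
next
  case False then show ?thesis by (simp add: prod_functional_def)
qed
lemma pf_homog: "prod_functional (\<lambda>i. c i *\<^sub>R fs i) (d *\<^sub>R g) z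
   = (\<Prod>i\<in>UNIV. c i) * d * prod_functional fs g z"
proof -
  have h: "\<And>p. (\<Prod>i\<in>UNIV. (c i *\<^sub>R fs i) $ fst p i) = (\<Prod>i\<in>UNIV. c i) * (\<Prod>i\<in>UNIV. fs i $ fst p i)"
    by (simp add: prod.distrib)
  show ?thesis unfolding prod_functional_def h
    by (simp add: sum_distrib_left mult_ac)
qed

lemma pf_bound:
  fixes fs :: "'k::finite \<Rightarrow> real^'n" and z :: "real^(('k \<Rightarrow> 'n) \<times> 'n)"
  assumes "\<And>i. norm (fs i) \<le> 1" "norm g \<le> 1"
  shows "\<bar>prod_functional fs g z\<bar> \<le> real CARD(('k::finite \<Rightarrow> 'n) \<times> 'n) * norm z"
proof -
  have "\<bar>prod_functional fs g z\<bar> \<le> (\<Sum>p\<in>UNIV. \<bar>(\<Prod>i\<in>UNIV. fs i $ fst p i) * g $ snd p * z $ p\<bar>)"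
    unfolding prod_functional_def by (rule sum_abs)
  also have "\<dots> \<le> (\<Sum>p\<in>(UNIV::(('k \<Rightarrow> 'n) \<times> 'n) set). norm z)"
  proof (rule sum_mono)
    fix p :: "('k \<Rightarrow> 'n) \<times> 'n"
    have a: "\<bar>\<Prod>i\<in>UNIV. fs i $ fst p i\<bar> \<le> 1"
      unfolding abs_prod
      by (rule prod_le_1) (meson assms(1) component_le_norm_cart order_trans abs_ge_zero)
    have b: "\<bar>g $ snd p\<bar> \<le> 1" using assms component_le_norm_cart order_trans by blast
    have c: "\<bar>z $ p\<bar> \<le> norm z" by (rule component_le_norm_cart)
    have "\<bar>(\<Prod>i\<in>UNIV. fs i $ fst p i) * g $ snd p * z $ p\<bar>
       = \<bar>\<Prod>i\<in>UNIV. fs i $ fst p i\<bar> * \<bar>g $ snd p\<bar> * \<bar>z $ p\<bar>" by (simp add: abs_mult)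
    also have "\<dots> \<le> 1 * 1 * norm z"
      by (intro mult_mono) (auto simp: a b c)
    finally show "\<bar>(\<Prod>i\<in>UNIV. fs i $ fst p i) * g $ snd p * z $ p\<bar> \<le> norm z" by simp
  qed
  finally show ?thesis by simp
qed

lemma pf_zero_f: "fs i = 0 \<Longrightarrow> prod_functional fs g z = 0"
  unfolding prod_functional_def
  by (intro sum.neutral ballI) (metis (no_types, lifting) UNIV_I finite mult_eq_0_iff prod_zero zero_index)
lemma pf_zero_g: "g = 0 \<Longrightarrow> prod_functional fs g z = 0"
  unfolding prod_functional_def by simp

lemma interior_to_pos:
  fixes z :: "real^(('k::finite \<Rightarrow> 'n::finite) \<times> 'n)"
  assumes "z \<in> interior {z. \<forall>fs g. (\<forall>i. fs i \<in> A) \<longrightarrow> g \<in> B \<longrightarrow> 0 \<le> prod_functional fs g z}"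
    and "\<forall>i. fs i \<in> A \<and> fs i \<noteq> 0" "g \<in> B" "g \<noteq> 0"
  shows "0 < prod_functional fs g z"
proof -
  obtain e where e: "e > 0" "ball z e \<subseteq> {z. \<forall>fs g. (\<forall>i. fs i \<in> A) \<longrightarrow> g \<in> B \<longrightarrow> 0 \<le> prod_functional fs g z}"
    using assms(1) mem_interior by blast
  define t :: "real^(('k \<Rightarrow> 'n) \<times> 'n)" where "t = prod_tensor fs g"
  have pt: "prod_functional fs g t > 0"
    unfolding t_def pf_prod_tensor using assms(2,4)
    by (intro mult_pos_pos prod_pos) auto
  then have "t \<noteq> 0" using pf_zero by (metis less_irrefl)
  then have nt: "norm t > 0" by simp
  define w where "w = z - (e / (2 * norm t)) *\<^sub>R t"
  have "dist z w = e / 2" using nt e unfolding w_def dist_norm by simp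
  then have "w \<in> ball z e" using e by simp
  then have "0 \<le> prod_functional fs g w" using e assms(2,3) by blast
  also have "prod_functional fs g w = prod_functional fs g z - (e / (2 * norm t)) * prod_functional fs g t"
    unfolding w_def pf_diff pf_scale ..
  finally have "(e / (2 * norm t)) * prod_functional fs g t \<le> prod_functional fs g z" by simp
  moreover have "(e / (2 * norm t)) * prod_functional fs g t > 0" using e nt pt by simp
  ultimately show ?thesis by linarith
qed

lemma pos_to_interior:
  fixes z :: "real^(('k::finite \<Rightarrow> 'n::finite) \<times> 'n)"
  assumes A: "closed A" "cone A" and B: "closed B" "cone B"
    and pos: "\<forall>fs g. (\<forall>i. fs i \<in> A \<and> fs i \<noteq> 0) \<longrightarrow> g \<in> B \<longrightarrow> g \<noteq> 0 \<longrightarrow> 0 < prod_functional fs g z"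
  shows "z \<in> interior {z. \<forall>fs g. (\<forall>i. fs i \<in> A) \<longrightarrow> g \<in> B \<longrightarrow> 0 \<le> prod_functional fs g z}"
    (is "_ \<in> interior ?M")
proof (cases "A - {0} = {} \<or> B - {0} = {}")
  case True
  have "?M = UNIV"
  proof safe
    fix w :: "real^(('k \<Rightarrow> 'n) \<times> 'n)" and fs :: "'k \<Rightarrow> real^'n" and g
    assume "\<forall>i. fs i \<in> A" "g \<in> B"
    with True have "fs undefined = 0 \<or> g = 0" by blast
    then show "0 \<le> prod_functional fs g w" using pf_zero_f pf_zero_g by (metis order_refl)
  qed simp
  then show ?thesis by simp
next
  case False
  then obtain a0 b0 where a0: "a0 \<in> A" "a0 \<noteq> 0" and b0: "b0 \<in> B" "b0 \<noteq> 0" by blast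
  have nrm: "(1 / norm x) *\<^sub>R x \<in> C \<and> norm ((1 / norm x) *\<^sub>R x) = 1"
    if "cone C" "x \<in> C" "x \<noteq> 0" for C and x :: "real^'n"
    using that by (simp add: cone_def)
  define S1 :: "((real^'n)^'k) set" where "S1 = {V. \<forall>i. V $ i \<in> A \<inter> sphere 0 1}"
  define S2 where "S2 = B \<inter> sphere 0 1"
  have cS1: "compact S1"
  proof -
    have cl: "closed ((\<lambda>V::(real^'n)^'k. V$i) -` (A \<inter> sphere 0 1))" for i
      by (intro closed_vimage_vec_nth closed_Int A) simp
    have eq: "{V::(real^'n)^'k. V $ i \<in> A \<inter> sphere 0 1} = (\<lambda>V::(real^'n)^'k. V$i) -` (A \<inter> sphere 0 1)" for i
      by auto
    have "closed S1" unfolding S1_def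
      by (rule closed_Collect_all) (subst eq, rule cl)
    moreover have "S1 \<subseteq> cball 0 (real CARD('k))"
    proof
      fix V assume "V \<in> S1"
      then have "\<forall>i. norm (V $ i) = 1" unfolding S1_def by simp
      then have "norm V \<le> (\<Sum>i\<in>UNIV. norm (V $ i))"
        unfolding norm_vec_def by (intro L2_set_le_sum) simp
      with \<open>\<forall>i. norm (V $ i) = 1\<close> show "V \<in> cball 0 (real CARD('k))" by simp
    qed
    ultimately show ?thesis using bounded_cball bounded_subset compact_eq_bounded_closed by metis
  qed
  have cS2: "compact S2" unfolding S2_def using B by (intro closed_Int_compact) auto
  define S where "S = S1 \<times> S2"
  have cS: "compact S" unfolding S_def using cS1 cS2 by (rule compact_Times)
  have neS: "S \<noteq> {}"
  proof -
    have "((\<chi> i. (1 / norm a0) *\<^sub>R a0), (1 / norm b0) *\<^sub>R b0) \<in> S"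
      unfolding S_def S1_def S2_def using nrm[OF A(2) a0] nrm[OF B(2) b0] by simp
    then show ?thesis by blast
  qed
  define F where "F = (\<lambda>x::((real^'n)^'k) \<times> (real^'n). prod_functional (\<lambda>i. fst x $ i) (snd x) z)"
  have contF: "continuous_on S F"
    unfolding F_def prod_functional_def by (intro continuous_intros)
  obtain x0 where x0: "x0 \<in> S" "\<forall>y\<in>S. F x0 \<le> F y"
    using continuous_attains_inf[OF cS neS contF] by blast
  define \<delta> where "\<delta> = F x0"
  have "\<delta> > 0" unfolding \<delta>_def F_def
  proof -
    have "\<forall>i. fst x0 $ i \<in> A \<and> fst x0 $ i \<noteq> 0" "snd x0 \<in> B" "snd x0 \<noteq> 0"
      using x0(1) unfolding S_def S1_def S2_def by (auto simp: mem_Times_iff) (metis norm_zero zero_neq_one)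
    then show "0 < prod_functional (\<lambda>i. fst x0 $ i) (snd x0) z" using pos by blast
  qed
  define N where "N = real CARD(('k \<Rightarrow> 'n) \<times> 'n)"
  have N: "N > 0" unfolding N_def by simp
  have "ball z (\<delta> / N) \<subseteq> ?M"
  proof safe
    fix w and fs :: "'k \<Rightarrow> real^'n" and g assume w: "w \<in> ball z (\<delta> / N)" and fs: "\<forall>i. fs i \<in> A" and g: "g \<in> B"
    show "0 \<le> prod_functional fs g w"
    proof (cases "(\<exists>i. fs i = 0) \<or> g = 0")
      case True then show ?thesis using pf_zero_f pf_zero_g by (metis order_refl)
    next
      case False
      define fs' where "fs' = (\<lambda>i. (1 / norm (fs i)) *\<^sub>R fs i)"
      define g' where "g' = (1 / norm g) *\<^sub>R g"
      have fs': "\<forall>i. fs' i \<in> A \<and> norm (fs' i) = 1" unfolding fs'_def using nrm[OF A(2)] fs False by blast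
      have g': "g' \<in> B \<and> norm g' = 1" unfolding g'_def using nrm[OF B(2)] g False by blast
      have "((\<chi> i. fs' i), g') \<in> S" unfolding S_def S1_def S2_def using fs' g' by simp
      then have "\<delta> \<le> F ((\<chi> i. fs' i), g')" using x0 unfolding \<delta>_def by blast
      then have d: "\<delta> \<le> prod_functional fs' g' z" unfolding F_def by (simp add: vec_lambda_inverse)
      have "\<bar>prod_functional fs' g' (w - z)\<bar> \<le> N * norm (w - z)"
        unfolding N_def by (rule pf_bound) (use fs' g' in auto)
      also have "\<dots> < N * (\<delta> / N)" using w N by (simp add: dist_norm norm_minus_commute pos_less_divide_eq mult.commute)
      also have "\<dots> = \<delta>" using N by simp
      finally have pw: "0 < prod_functional fs' g' w" using d unfolding pf_diff by linarith
      have eqf: "fs = (\<lambda>i. norm (fs i) *\<^sub>R fs' i)" unfolding fs'_def using False by (auto simp: fun_eq_iff)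
      have eqg: "g = norm g *\<^sub>R g'" unfolding g'_def using False by simp
      have "prod_functional fs g w = (\<Prod>i\<in>UNIV. norm (fs i)) * norm g * prod_functional fs' g' w"
        by (subst eqf, subst eqg, rule pf_homog)
      moreover have "0 \<le> (\<Prod>i\<in>UNIV. norm (fs i)) * norm g"
        by (intro mult_nonneg_nonneg prod_nonneg) auto
      ultimately show ?thesis using pw by (metis less_imp_le mult_nonneg_nonneg)
    qed
  qed
  moreover have "\<delta> / N > 0" using \<open>\<delta> > 0\<close> N by simp
  ultimately show ?thesis unfolding mem_interior by blast
qed



lemma dual_cone_closed: "closed (dual_cone C)"
proof -
  have "dual_cone C = (\<Inter>x\<in>C. {f. 0 \<le> f \<bullet> x})" unfolding dual_cone_def by auto
  moreover have "closed {f. 0 \<le> f \<bullet> x}" for x :: "real^'n"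
    using closed_halfspace_ge[of 0 x] by (simp add: inner_commute)
  ultimately show ?thesis by auto
qed

lemma dual_cone_cone: "cone (dual_cone C)"
  unfolding cone_def dual_cone_def by simp

lemma bipolar:
  fixes C :: "(real^'n) set"
  assumes "closed C" "convex C" "cone C" "C \<noteq> {}"
  shows "dual_cone (dual_cone C) = C"
proof
  show "C \<subseteq> dual_cone (dual_cone C)" unfolding dual_cone_def by (auto simp: inner_commute)
next
  show "dual_cone (dual_cone C) \<subseteq> C"
  proof
    fix g assume g: "g \<in> dual_cone (dual_cone C)"
    show "g \<in> C"
    proof (rule ccontr)
      assume "g \<notin> C"
      then obtain a b where ab: "a \<bullet> g < b" "\<forall>x\<in>C. b < a \<bullet> x"
        using separating_hyperplane_closed_point[OF assms(2,1)] by blast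
      have "0 \<in> C" using assms(3,4) unfolding cone_def by (metis ex_in_conv order_refl scaleR_zero_left)
      then have "b < a \<bullet> 0" using ab by blast
      then have b0: "b < 0" by simp
      have "a \<in> dual_cone C"
        unfolding dual_cone_def
      proof safe
        fix x assume x: "x \<in> C"
        show "0 \<le> a \<bullet> x"
        proof (rule ccontr)
          assume neg: "\<not> 0 \<le> a \<bullet> x"
          define t where "t = b / (a \<bullet> x)"
          have t: "t > 0" unfolding t_def using neg b0 by (simp add: divide_neg_neg)
          have "t *\<^sub>R x \<in> C" using assms(3) x t unfolding cone_def by simp
          then have "b < a \<bullet> (t *\<^sub>R x)" using ab by blast
          also have "a \<bullet> (t *\<^sub>R x) = b" unfolding t_def using neg by simp
          finally show False by simp
        qed
      qed
      then have "0 \<le> g \<bullet> a" using g unfolding dual_cone_def by blast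
      then show False using ab b0 by (simp add: inner_commute)
    qed
  qed
qed

lemma interior_dual_bound:
  assumes "\<phi> \<in> interior (dual_cone C)"
  shows "\<exists>e>0. \<forall>c\<in>C. e * norm c \<le> \<phi> \<bullet> c"
proof -
  obtain e where e: "e > 0" "ball \<phi> e \<subseteq> dual_cone C" using assms mem_interior by blast
  have "e / 2 * norm c \<le> \<phi> \<bullet> c" if c: "c \<in> C" for c
  proof (cases "c = 0")
    case True then show ?thesis by simp
  next
    case False
    define v where "v = \<phi> - (e / 2 / norm c) *\<^sub>R c"
    have "dist \<phi> v = e / 2" unfolding v_def dist_norm using False e by simp
    then have "v \<in> dual_cone C" using e by auto
    then have "0 \<le> v \<bullet> c" using c unfolding dual_cone_def by blast
    also have "v \<bullet> c = \<phi> \<bullet> c - (e / 2 / norm c) * (c \<bullet> c)" unfolding v_def by (simp add: inner_diff_left)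
    also have "(e / 2 / norm c) * (c \<bullet> c) = e / 2 * norm c"
      using False by (simp add: dot_square_norm power2_eq_square)
    finally show ?thesis by simp
  qed
  then show ?thesis using e by (intro exI[of _ "e/2"]) auto
qed

lemma kill_one:
  fixes K :: "(real^'n) set"
  assumes K: "convex K" and xF: "\<And>F. F facet_of K \<Longrightarrow> xF F \<in> rel_interior F"
    and fpos: "\<forall>x\<in>K. 0 \<le> f \<bullet> x" and fnz: "\<not> (\<forall>x\<in>K. f \<bullet> x = 0)"
    and F1: "F1 facet_of K" and F2: "F2 facet_of K"
    and z1: "f \<bullet> xF F1 = 0" and z2: "f \<bullet> xF F2 = 0"
  shows "F1 = F2"
proof -
  define G where "G = K \<inter> {x. f \<bullet> x = 0}"
  have G: "G face_of K" unfolding G_def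
    using fpos by (intro face_of_Int_supporting_hyperplane_ge K) auto
  have GK: "G \<noteq> K" using fnz unfolding G_def by auto
  have adG: "aff_dim G < aff_dim K" using face_of_aff_dim_lt[OF K G GK] .
  have eq: "F = G" if F: "F facet_of K" and z: "f \<bullet> xF F = 0" for F
  proof -
    have FK: "F face_of K" "aff_dim F = aff_dim K - 1" using F unfolding facet_of_def by auto
    have sub: "F \<subseteq> K" using FK(1) face_of_imp_subset by blast
    have "xF F \<in> rel_interior F" using xF F by blast
    then have "xF F \<in> F" using rel_interior_subset by blast
    then have "xF F \<in> G \<inter> rel_interior F" using sub z \<open>xF F \<in> rel_interior F\<close> unfolding G_def by auto
    then have FG: "F \<subseteq> G" using subset_of_face_of[OF G sub] by blast
    then have "F face_of G" using face_of_subset[OF FK(1) FG] face_of_imp_subset[OF G] by blast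
    show "F = G"
    proof (rule ccontr)
      assume "F \<noteq> G"
      then have "aff_dim F < aff_dim G"
        using face_of_aff_dim_lt[OF face_of_imp_convex[OF G] \<open>F face_of G\<close>] by blast
      then show False using adG FK(2) by linarith
    qed
  qed
  show ?thesis using eq[OF F1 z1] eq[OF F2 z2] by simp
qed

lemma vertex_below:
  fixes K :: "(real^'n) set"
  assumes K: "convex K" "compact K" and y: "y \<in> K"
  shows "\<exists>x. x extreme_point_of K \<and> (\<forall>F. F facet_of K \<longrightarrow> y \<in> F \<longrightarrow> x \<in> F)"
proof -
  define G where "G = \<Inter>(insert K {F. F facet_of K \<and> y \<in> F})"
  have G: "G face_of K" unfolding G_def
    by (rule face_of_Inter) (auto simp: facet_of_def face_of_refl K)
  have "y \<in> G" unfolding G_def using y by auto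
  then obtain x where x: "x extreme_point_of G"
    using extreme_point_exists_convex[OF face_of_imp_compact[OF K G] face_of_imp_convex[OF G]] by blast
  then have "x extreme_point_of K" "x \<in> G" using extreme_point_of_face[OF G] by blast+
  then show ?thesis unfolding G_def by blast
qed


theorem proposition3:
  fixes C :: "(real^'n) set" and \<phi> :: "real^'n"
    and xF \<psi> :: "(real^'n) set \<Rightarrow> real^'n"
  assumes "polyhedral_cone C" and "proper_cone C"
    and "\<phi> \<in> interior (dual_cone C)"
    and "\<forall>F. F facet_of Kphi C \<phi> \<longrightarrow>
           \<psi> F \<in> dual_cone C \<and> F = Kphi C \<phi> \<inter> {x. \<psi> F \<bullet> x = 0}"
    and "\<forall>F. F facet_of Kphi C \<phi> \<longrightarrow> xF F \<in> rel_interior F"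
  shows "(omega (Kphi C \<phi>) xF \<psi> :: real^(('k::finite \<Rightarrow> 'n) \<times> 'n))
            \<in> interior (max_tensor_cone C)
         \<longleftrightarrow> (\<forall>x. x extreme_point_of Kphi C \<phi> \<longrightarrow> card (Av (Kphi C \<phi>) x) > CARD('k))"
proof -
  define K where "K = Kphi C \<phi>"
  define \<omega> where "\<omega> = (omega K xF \<psi> :: real^(('k::finite \<Rightarrow> 'n) \<times> 'n))"
  have Cc: "closed C" "convex C" "cone C" "C \<noteq> {}"
    using assms(2) unfolding proper_cone_def by auto
  have noHyp: "\<not> (\<exists>a b. a \<noteq> 0 \<and> C \<subseteq> {x. a \<bullet> x = b})"
    using assms(2) unfolding proper_cone_def by blast
  have polyC: "polyhedron C" using assms(1) unfolding polyhedral_cone_def by blast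
  have Kdef: "K = C \<inter> {x. \<phi> \<bullet> x = 1}" unfolding K_def Kphi_def ..
  obtain e where e: "e > 0" "\<forall>c\<in>C. e * norm c \<le> \<phi> \<bullet> c"
    using interior_dual_bound[OF assms(3)] by blast
  have phipos: "\<phi> \<bullet> c > 0" if "c \<in> C" "c \<noteq> 0" for c
  proof -
    have "e * norm c > 0" using that e by simp
    moreover have "e * norm c \<le> \<phi> \<bullet> c" using e that by blast
    ultimately show ?thesis by linarith
  qed
  have phidual: "\<phi> \<in> dual_cone C" using assms(3) interior_subset by blast
  have KC: "K \<subseteq> C" unfolding Kdef by blast
  have Kconv: "convex K" unfolding Kdef using Cc by (intro convex_Int convex_hyperplane) auto
  have Kcomp: "compact K"
  proof -
    have "closed K" unfolding Kdef using Cc by (intro closed_Int closed_hyperplane) auto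
    moreover have "K \<subseteq> cball 0 (1 / e)"
    proof
      fix x assume "x \<in> K"
      then have "e * norm x \<le> 1" using e unfolding Kdef by auto
      then show "x \<in> cball 0 (1 / e)" using e by (simp add: field_simps)
    qed
    ultimately show ?thesis using bounded_cball bounded_subset compact_eq_bounded_closed by metis
  qed
  have finF: "finite {F. F facet_of K}"
  proof -
    have "polyhedron K" unfolding Kdef using polyC polyhedron_hyperplane by (intro polyhedron_Int) auto
    then have "finite {F. F face_of K}" by (rule finite_polyhedron_faces)
    then show ?thesis by (rule rev_finite_subset) (auto simp: facet_of_def)
  qed
  have scale: "(1 / (\<phi> \<bullet> c)) *\<^sub>R c \<in> K" if "c \<in> C" "c \<noteq> 0" for c
  proof -
    have "\<phi> \<bullet> c > 0" using phipos that by blast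
    then show ?thesis unfolding Kdef using Cc(3) that unfolding cone_def by auto
  qed
  have fnzK: "\<not> (\<forall>x\<in>K. f \<bullet> x = 0)" if "f \<noteq> 0" for f
  proof
    assume all: "\<forall>x\<in>K. f \<bullet> x = 0"
    have "C \<subseteq> {x. f \<bullet> x = 0}"
    proof
      fix c assume c: "c \<in> C"
      show "c \<in> {x. f \<bullet> x = 0}"
      proof (cases "c = 0")
        case True then show ?thesis by simp
      next
        case False
        then have "f \<bullet> ((1 / (\<phi> \<bullet> c)) *\<^sub>R c) = 0" using all scale c by blast
        moreover have "\<phi> \<bullet> c > 0" using phipos c False by blast
        ultimately show ?thesis by simp
      qed
    qed
    then show False using noHyp that by blast
  qed
  have psiF: "\<psi> F \<in> dual_cone C" "F = K \<inter> {x. \<psi> F \<bullet> x = 0}" if "F facet_of K" for F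
    using assms(4) that unfolding K_def by blast+
  have psinz: "\<psi> F \<noteq> 0" if "F facet_of K" for F
  proof
    assume "\<psi> F = 0"
    then have "F = K" using psiF(2)[OF that] by simp
    then show False using that by simp
  qed
  have xFF: "xF F \<in> F" "xF F \<in> rel_interior F" if "F facet_of K" for F
    using assms(5) that rel_interior_subset unfolding K_def by blast+
  have FK: "F \<subseteq> K" if "F facet_of K" for F
    using that unfolding facet_of_def using face_of_imp_subset by blast
  have pfw: "prod_functional fs g \<omega> = (\<Sum>F\<in>{F. F facet_of K}. (\<Prod>i\<in>UNIV. fs i \<bullet> xF F) * (g \<bullet> \<psi> F))"
    for fs :: "'k \<Rightarrow> real^'n" and g
  proof -
    have "tensor_power_dual x p = (prod_tensor (\<lambda>_. x) p :: real^(('k \<Rightarrow> 'n) \<times> 'n))" for x p :: "real^'n"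
      unfolding tensor_power_dual_def prod_tensor_def by simp
    then show ?thesis unfolding \<omega>_def omega_def pf_sum by (simp add: pf_prod_tensor)
  qed
  have DD: "dual_cone (dual_cone C) = C" using bipolar Cc by blast
  have M: "max_tensor_cone C = {z :: real^(('k \<Rightarrow> 'n) \<times> 'n). \<forall>fs g. (\<forall>i. fs i \<in> dual_cone C) \<longrightarrow> g \<in> C \<longrightarrow> 0 \<le> prod_functional fs g z}"
    unfolding max_tensor_cone_def DD ..
  have IntIff: "\<omega> \<in> interior (max_tensor_cone C) \<longleftrightarrow>
     (\<forall>fs g. (\<forall>i. fs i \<in> dual_cone C \<and> fs i \<noteq> 0) \<longrightarrow> g \<in> C \<longrightarrow> g \<noteq> 0 \<longrightarrow> 0 < prod_functional fs g \<omega>)"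
    unfolding M
  proof
    assume "\<omega> \<in> interior {z. \<forall>fs g. (\<forall>i. fs i \<in> dual_cone C) \<longrightarrow> g \<in> C \<longrightarrow> 0 \<le> prod_functional fs g z}"
    then show "\<forall>fs g. (\<forall>i. fs i \<in> dual_cone C \<and> fs i \<noteq> 0) \<longrightarrow> g \<in> C \<longrightarrow> g \<noteq> 0 \<longrightarrow> 0 < prod_functional fs g \<omega>"
      using interior_to_pos by blast
  next
    assume "\<forall>fs g. (\<forall>i. fs i \<in> dual_cone C \<and> fs i \<noteq> 0) \<longrightarrow> g \<in> C \<longrightarrow> g \<noteq> 0 \<longrightarrow> 0 < prod_functional fs g \<omega>"
    then show "\<omega> \<in> interior {z. \<forall>fs g. (\<forall>i. fs i \<in> dual_cone C) \<longrightarrow> g \<in> C \<longrightarrow> 0 \<le> prod_functional fs g z}"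
      using Cc by (intro pos_to_interior dual_cone_closed dual_cone_cone) auto
  qed
  have RHS: "(\<forall>fs g. (\<forall>i. fs i \<in> dual_cone C \<and> fs i \<noteq> 0) \<longrightarrow> g \<in> C \<longrightarrow> g \<noteq> 0 \<longrightarrow> 0 < prod_functional fs g \<omega>)
     \<longleftrightarrow> (\<forall>x. x extreme_point_of K \<longrightarrow> card (Av K x) > CARD('k))"
  proof
    assume pos: "\<forall>fs g. (\<forall>i. fs i \<in> dual_cone C \<and> fs i \<noteq> 0) \<longrightarrow> g \<in> C \<longrightarrow> g \<noteq> 0 \<longrightarrow> 0 < prod_functional fs g \<omega>"
    show "\<forall>x. x extreme_point_of K \<longrightarrow> card (Av K x) > CARD('k)"
    proof (intro allI impI, rule ccontr)
      fix x assume x: "x extreme_point_of K" and le: "\<not> CARD('k) < card (Av K x)"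
      define A where "A = Av K x"
      have xK: "x \<in> K" using x unfolding extreme_point_of_def by blast
      have finA: "finite A" unfolding A_def Av_def by (rule rev_finite_subset[OF finF]) auto
      obtain h :: "(real^'n) set \<Rightarrow> 'k" where h: "inj_on h A"
        using card_le_inj[of A "UNIV::'k set"] finA le unfolding A_def by auto
      define fs where "fs i = (if i \<in> h ` A then \<psi> (inv_into A h i) else \<phi>)" for i
      have x1: "\<phi> \<bullet> x = 1" using xK unfolding Kdef by blast
      then have phinz: "\<phi> \<noteq> 0" and xnz: "x \<noteq> 0" by auto
      have fsok: "\<forall>i. fs i \<in> dual_cone C \<and> fs i \<noteq> 0"
      proof
        fix i show "fs i \<in> dual_cone C \<and> fs i \<noteq> 0"
        proof (cases "i \<in> h ` A")
          case True
          then have "inv_into A h i \<in> A" by (rule inv_into_into)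
          then have "inv_into A h i facet_of K" unfolding A_def Av_def by blast
          then show ?thesis unfolding fs_def using True psiF psinz by simp
        next
          case False then show ?thesis unfolding fs_def using phidual phinz by simp
        qed
      qed
      have "0 < prod_functional fs x \<omega>" using pos fsok xK KC xnz by blast
      also have "prod_functional fs x \<omega> = 0"
        unfolding pfw
      proof (rule sum.neutral, rule ballI)
        fix F assume "F \<in> {F. F facet_of K}"
        then have F: "F facet_of K" by simp
        show "(\<Prod>i\<in>UNIV. fs i \<bullet> xF F) * (x \<bullet> \<psi> F) = 0"
        proof (cases "x \<in> F")
          case True
          then have "\<psi> F \<bullet> x = 0" using psiF(2)[OF F] by blast
          then show ?thesis by (simp add: inner_commute)
        next
          case False
          then have FA: "F \<in> A" unfolding A_def Av_def using F by blast
          then have "fs (h F) = \<psi> F" unfolding fs_def using h by simp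
          moreover have "\<psi> F \<bullet> xF F = 0" using psiF(2)[OF F] xFF(1)[OF F] by blast
          ultimately have "fs (h F) \<bullet> xF F = 0" by simp
          then have "(\<Prod>i\<in>UNIV. fs i \<bullet> xF F) = 0"
            by (intro prod_zero) auto
          then show ?thesis by simp
        qed
      qed
      finally show False by simp
    qed
  next
    assume card: "\<forall>x. x extreme_point_of K \<longrightarrow> card (Av K x) > CARD('k)"
    show "\<forall>fs g. (\<forall>i. fs i \<in> dual_cone C \<and> fs i \<noteq> 0) \<longrightarrow> g \<in> C \<longrightarrow> g \<noteq> 0 \<longrightarrow> 0 < prod_functional fs g \<omega>"
    proof (intro allI impI)
      fix fs :: "'k \<Rightarrow> real^'n" and g
      assume fs: "\<forall>i. fs i \<in> dual_cone C \<and> fs i \<noteq> 0" and g: "g \<in> C" "g \<noteq> 0"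
      define y where "y = (1 / (\<phi> \<bullet> g)) *\<^sub>R g"
      have yK: "y \<in> K" unfolding y_def using scale g by blast
      have pg: "\<phi> \<bullet> g > 0" using phipos g by blast
      obtain x where x: "x extreme_point_of K" "\<forall>F. F facet_of K \<longrightarrow> y \<in> F \<longrightarrow> x \<in> F"
        using vertex_below[OF Kconv Kcomp yK] by blast
      define Kill where "Kill = (\<Union>i. {F. F facet_of K \<and> fs i \<bullet> xF F = 0})"
      have finKill: "finite Kill" unfolding Kill_def by (rule rev_finite_subset[OF finF]) auto
      have "card Kill \<le> (\<Sum>i\<in>UNIV. card {F. F facet_of K \<and> fs i \<bullet> xF F = 0})"
        unfolding Kill_def by (rule card_UN_le) simp
      also have "\<dots> \<le> (\<Sum>i\<in>(UNIV::'k set). 1)"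
      proof (rule sum_mono)
        fix i :: 'k
        have fin: "finite {F. F facet_of K \<and> fs i \<bullet> xF F = 0}" by (rule rev_finite_subset[OF finF]) auto
        have fpos: "\<forall>x\<in>K. 0 \<le> fs i \<bullet> x" using fs KC unfolding dual_cone_def by blast
        have "\<forall>a1\<in>{F. F facet_of K \<and> fs i \<bullet> xF F = 0}. \<forall>a2\<in>{F. F facet_of K \<and> fs i \<bullet> xF F = 0}. a1 = a2"
          using kill_one[OF Kconv xFF(2) fpos fnzK] fs by blast
        then show "card {F. F facet_of K \<and> fs i \<bullet> xF F = 0} \<le> 1"
          using card_le_Suc0_iff_eq[OF fin] by simp
      qed
      also have "\<dots> = CARD('k)" by simp
      finally have cK: "card Kill \<le> CARD('k)" .
      have "\<not> Av K x \<subseteq> Kill"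
      proof
        assume "Av K x \<subseteq> Kill"
        then have "card (Av K x) \<le> card Kill" using card_mono finKill by blast
        then show False using cK card x(1) by fastforce
      qed
      then obtain F where F: "F \<in> Av K x" "F \<notin> Kill" by blast
      have Ff: "F facet_of K" "x \<notin> F" using F(1) unfolding Av_def by blast+
      have t1: "(\<Prod>i\<in>UNIV. fs i \<bullet> xF F) > 0"
      proof (rule prod_pos)
        fix i :: 'k
        have "xF F \<in> C" using xFF(1)[OF Ff(1)] FK[OF Ff(1)] KC by blast
        then have "0 \<le> fs i \<bullet> xF F" using fs unfolding dual_cone_def by blast
        moreover have "fs i \<bullet> xF F \<noteq> 0" using F(2) Ff(1) unfolding Kill_def by blast
        ultimately show "0 < fs i \<bullet> xF F" by simp
      qed
      have t2: "g \<bullet> \<psi> F > 0"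
      proof -
        have "0 \<le> \<psi> F \<bullet> g" using psiF(1)[OF Ff(1)] g unfolding dual_cone_def by blast
        moreover have "\<psi> F \<bullet> g \<noteq> 0"
        proof
          assume "\<psi> F \<bullet> g = 0"
          then have "\<psi> F \<bullet> y = 0" unfolding y_def by simp
          then have "y \<in> F" using psiF(2)[OF Ff(1)] yK by blast
          then show False using x(2) Ff by blast
        qed
        ultimately show ?thesis by (simp add: inner_commute)
      qed
      show "0 < prod_functional fs g \<omega>"
        unfolding pfw
      proof (rule sum_pos2[OF finF])
        show "F \<in> {F. F facet_of K}" using Ff by simp
        show "0 < (\<Prod>i\<in>UNIV. fs i \<bullet> xF F) * (g \<bullet> \<psi> F)" using t1 t2 by simp
      next
        fix G assume "G \<in> {F. F facet_of K}"
        then have G: "G facet_of K" by simp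
        have "xF G \<in> C" using xFF(1)[OF G] FK[OF G] KC by blast
        then have "\<forall>i. 0 \<le> fs i \<bullet> xF G" using fs unfolding dual_cone_def by blast
        then have "0 \<le> (\<Prod>i\<in>UNIV. fs i \<bullet> xF G)" by (simp add: prod_nonneg)
        moreover have "0 \<le> g \<bullet> \<psi> G" using psiF(1)[OF G] g unfolding dual_cone_def by (simp add: inner_commute)
        ultimately show "0 \<le> (\<Prod>i\<in>UNIV. fs i \<bullet> xF G) * (g \<bullet> \<psi> G)" by simp
      qed
    qed
  qed
  show ?thesis using IntIff RHS unfolding \<omega>_def K_def by simp
qed

end
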